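(* Assume $n>3t+2d$. In any execution of Algorithm 1, if a correct process $p_i$ mbrb-broadcasts an app-message $m$ with sequence number $sn$, then at least one correct process eventually mbrb-delivers $m$ from $p_i$ with sequence number $sn$.
   Context: System model. There are $n$ asynchronous processes $p_1,\dots,p_n$ with distinct known identities. Up to $t$ are Byzantine (arbitrary behavior); the rest are correct; $c$ is the number of correct processes in the execution, $n-t\le c\le n$. The network is fully connected, asynchronous, never corrupts/duplicates/creates messages; "broadcast $M$" sends $M$ to all $n$ processes; a message adversary may suppress, per broadcast by a correct process, up to $d$ ($0\le d<c$) copies addressed to correct processes, all other copies among correct processes being eventually received. Signatures are unforgeable and public keys are known. Algorithm 1 (code for $p_i$). Each process stores, for each triplet $(m,sn,j)$, a set of saved valid signatures of that triplet, at most one per signer. On $\mathrm{mbrb\_broadcast}(m,sn)$: $p_i$ saves its own signature of $(m,sn,i)$ and broadcasts $\mathrm{BUNDLE}(m,sn,i,S)$, $S$ the saved signatures for $(m,sn,i)$. On receiving $\mathrm{BUNDLE}(m,sn,j,sigs)$: if $p_i$ has not already mbrb-delivered some $(-,sn,j)$ and $sigs$ contains a valid signature of $(m,sn,j)$ by $p_j$, then: (1) save all new valid signatures of $(m,sn,j)$ in $sigs$; (2) if $p_i$ has not yet signed any $(-,sn,j)$, save its own signature of $(m,sn,j)$ and broadcast $\mathrm{BUNDLE}(m,sn,j,\text{all saved signatures for }(m,sn,j))$; (3) if strictly more than $\frac{n+t}{2}$ signatures for $(m,sn,j)$ are saved, broadcast $\mathrm{BUNDLE}(m,sn,j,\text{all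 saved signatures})$ and mbrb-deliver $(m,sn,j)$. A correct process never uses the same sequence number twice. *)

theory Defs
  imports Main
begin

text \<open>
  Processes are identified by 0..<n.  An app-message has type 'm, sequence
  numbers are nat, a triplet is (m, sn, j).  Signatures are symbolic: a
  signature is a pair (k, T) meaning "signature of triplet T by process k".
  Unforgeability is enforced on the messages Byzantine processes may send.
\<close>

type_synonym 'm triplet = "'m \<times> nat \<times> nat"
type_synonym 'm sig = "nat \<times> 'm triplet"

datatype 'm msg = BUNDLE 'm nat nat "'m sig set"

record 'm lstate =
  saved     :: "'m triplet \<Rightarrow> nat set"   \<comment> \<open>signers of the saved valid signatures of each triplet\<close>
  signedsn  :: "(nat \<times> nat) set"          \<comment> \<open>pairs (sn, j) such that the process signed some (-, sn, j)\<close>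
  delivered :: "'m triplet set"
  bcasts    :: "('m \<times> nat) set"

text \<open>A network copy: (message id, sender, destination, message).\<close>
type_synonym 'm copy = "(nat \<times> nat) \<times> nat \<times> nat \<times> 'm msg"

record 'm gstate =
  loc :: "nat \<Rightarrow> 'm lstate"
  net :: "'m copy set"

definition lstate0 :: "'m lstate" where
  "lstate0 = \<lparr>saved = (\<lambda>_. {}), signedsn = {}, delivered = {}, bcasts = {}\<rparr>"

definition gstate0 :: "'m gstate" where
  "gstate0 = \<lparr>loc = (\<lambda>_. lstate0), net = {}\<rparr>"

definition sigs_of :: "nat set \<Rightarrow> 'm triplet \<Rightarrow> 'm sig set" where
  "sigs_of S T = (\<lambda>k. (k, T)) ` S"

definition bcast_handler :: "nat \<Rightarrow> 'm \<Rightarrow> nat \<Rightarrow> 'm lstate \<Rightarrow> 'm lstate \<times> 'm msg list" where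
  "bcast_handler i m sn L =
     (let T = (m, sn, i);
          L1 = L\<lparr>saved := (saved L)(T := insert i (saved L T)),
                 signedsn := insert (sn, i) (signedsn L),
                 bcasts := insert (m, sn) (bcasts L)\<rparr>
      in (L1, [BUNDLE m sn i (sigs_of (saved L1 T) T)]))"

text \<open>Code executed by p_i on receipt of BUNDLE(m, sn, j, sigs), n processes, threshold t.
  "strictly more than (n+t)/2 signatures" is written 2 * card > n + t.\<close>
definition recv_handler :: "nat \<Rightarrow> nat \<Rightarrow> nat \<Rightarrow> 'm msg \<Rightarrow> 'm lstate \<Rightarrow> 'm lstate \<times> 'm msg list" where
  "recv_handler n t i M L =
     (case M of BUNDLE m sn j sigs \<Rightarrow>
       (let T = (m, sn, j) in
        if (\<exists>m'. (m', sn, j) \<in> delivered L) \<or> \<not> (j < n \<and> (j, T) \<in> sigs) then (L, [])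
        else
          (let L1 = L\<lparr>saved := (saved L)(T := saved L T \<union> {k. k < n \<and> (k, T) \<in> sigs})\<rparr>;
               (L2, b2) = (if (sn, j) \<notin> signedsn L1 then
                             (let L' = L1\<lparr>saved := (saved L1)(T := insert i (saved L1 T)),
                                          signedsn := insert (sn, j) (signedsn L1)\<rparr>
                              in (L', [BUNDLE m sn j (sigs_of (saved L' T) T)]))
                           else (L1, []))
           in if 2 * card (saved L2 T) > n + t
              then (L2\<lparr>delivered := insert T (delivered L2)\<rparr>,
                    b2 @ [BUNDLE m sn j (sigs_of (saved L2 T) T)])
              else (L2, b2))))"

text \<open>Copies put in the network at step k by correct sender p_i broadcasting the list ms,
  where Ds ! b is the set of correct destinations whose copy of the b-th broadcast is
  suppressed by the message adversary (copies to Byzantine processes are irrelevant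
  and omitted).\<close>
definition copies :: "nat set \<Rightarrow> nat \<Rightarrow> nat \<Rightarrow> 'm msg list \<Rightarrow> nat set list \<Rightarrow> 'm copy set" where
  "copies C k i ms Ds =
     {((k, b), i, dst, ms ! b) | b dst. b < length ms \<and> dst \<in> C - Ds ! b}"

definition adv_ok :: "nat set \<Rightarrow> nat \<Rightarrow> 'm msg list \<Rightarrow> nat set list \<Rightarrow> bool" where
  "adv_ok C d ms Ds \<longleftrightarrow> length Ds = length ms \<and> (\<forall>D\<in>set Ds. D \<subseteq> C \<and> card D \<le> d)"

definition step :: "nat \<Rightarrow> nat \<Rightarrow> nat \<Rightarrow> nat set \<Rightarrow> nat \<Rightarrow> 'm gstate \<Rightarrow> 'm gstate \<Rightarrow> bool" where
  "step n t d C k s s' \<longleftrightarrow>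
     \<comment> \<open>a correct process invokes mbrb_broadcast with a fresh sequence number\<close>
     (\<exists>i m sn L' ms Ds. i \<in> C \<and> sn \<notin> snd ` bcasts (loc s i) \<and>
        bcast_handler i m sn (loc s i) = (L', ms) \<and> adv_ok C d ms Ds \<and>
        s' = \<lparr>loc = (loc s)(i := L'), net = net s \<union> copies C k i ms Ds\<rparr>)
   \<or> \<comment> \<open>a correct process receives a message copy\<close>
     (\<exists>x\<in>net s. \<exists>idx sndr i M L' ms Ds. x = (idx, sndr, i, M) \<and> i \<in> C \<and>
        recv_handler n t i M (loc s i) = (L', ms) \<and> adv_ok C d ms Ds \<and>
        s' = \<lparr>loc = (loc s)(i := L'), net = (net s - {x}) \<union> copies C k i ms Ds\<rparr>)
   \<or> \<comment> \<open>a Byzantine process sends an arbitrary BUNDLE to a correct process;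
         it can only include signatures of correct processes they have produced\<close>
     (\<exists>b i m sn j sigs. b < n \<and> b \<notin> C \<and> i \<in> C \<and>
        (\<forall>(k, T)\<in>sigs. k \<in> C \<longrightarrow> k \<in> saved (loc s k) T) \<and>
        s' = s\<lparr>net := insert ((k, 0), b, i, BUNDLE m sn j sigs) (net s)\<rparr>)
   \<or> \<comment> \<open>nothing happens\<close>
     s' = s"

text \<open>Fairness: every copy sent by a
  correct process (and not suppressed) is eventually received.\<close>
definition mbrb_exec :: "nat \<Rightarrow> nat \<Rightarrow> nat \<Rightarrow> nat set \<Rightarrow> (nat \<Rightarrow> 'm gstate) \<Rightarrow> bool" where
  "mbrb_exec n t d C s \<longleftrightarrow>
     C \<subseteq> {..<n} \<and> n - t \<le> card C \<and> d < card C \<and>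
     s 0 = gstate0 \<and>
     (\<forall>k. step n t d C k (s k) (s (Suc k))) \<and>
     (\<forall>k x. x \<in> net (s k) \<longrightarrow> fst (snd x) \<in> C \<longrightarrow> (\<exists>k'\<ge>k. x \<notin> net (s k')))"

end

theory Submission
  imports Defs
begin


lemma bcast_eq:
  "bcast_handler i m sn L = (L\<lparr>saved := (saved L)((m,sn,i) := insert i (saved L (m,sn,i))),
                 signedsn := insert (sn, i) (signedsn L),
                 bcasts := insert (m, sn) (bcasts L)\<rparr>,
     [BUNDLE m sn i (sigs_of (insert i (saved L (m,sn,i))) (m,sn,i))])"
  unfolding bcast_handler_def Let_def by simp

definition chk :: "nat \<Rightarrow> 'm \<Rightarrow> nat \<Rightarrow> nat \<Rightarrow> 'm sig set \<Rightarrow> 'm lstate \<Rightarrow> bool" where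
  "chk n m sn j sigs L \<longleftrightarrow> \<not>((\<exists>m'. (m', sn, j) \<in> delivered L) \<or> \<not> (j < n \<and> (j, (m,sn,j)) \<in> sigs))"

definition newA :: "nat \<Rightarrow> nat \<Rightarrow> 'm \<Rightarrow> nat \<Rightarrow> nat \<Rightarrow> 'm sig set \<Rightarrow> 'm lstate \<Rightarrow> nat set" where
  "newA n q m sn j sigs L = saved L (m,sn,j) \<union> {k. k < n \<and> (k, (m,sn,j)) \<in> sigs}
       \<union> (if (sn,j) \<notin> signedsn L then {q} else {})"

lemma recv_eq:
  "recv_handler n t q (BUNDLE m sn j sigs) L =
   (if \<not> chk n m sn j sigs L then (L, []) else
    (let A = newA n q m sn j sigs L; ns = ((sn,j) \<notin> signedsn L); thr = (n + t < 2 * card A);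
         B = BUNDLE m sn j (sigs_of A (m,sn,j)) in
     (L\<lparr>saved := (saved L)((m,sn,j) := A),
        signedsn := (if ns then insert (sn,j) (signedsn L) else signedsn L),
        delivered := (if thr then insert (m,sn,j) (delivered L) else delivered L)\<rparr>,
      (if ns then [B] else []) @ (if thr then [B] else []))))"
  unfolding recv_handler_def chk_def newA_def Let_def
  by (auto split: if_splits simp: insert_absorb Un_commute)




fun msigs :: "'m msg \<Rightarrow> 'm sig set" where "msigs (BUNDLE _ _ _ S) = S"

definition minv :: "nat \<Rightarrow> nat \<Rightarrow> nat set \<Rightarrow> 'm gstate \<Rightarrow> bool" where "minv n t C st \<longleftrightarrow>
 (\<forall>q\<in>C. \<forall>T. saved (loc st q) T \<subseteq> {..<n}) \<and>
 (\<forall>q\<in>C. \<forall>p\<in>C. \<forall>T. p \<in> saved (loc st q) T \<longrightarrow> p \<in> saved (loc st p) T) \<and>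
 (\<forall>x\<in>net st. \<forall>p\<in>C. \<forall>T. (p,T) \<in> msigs (snd (snd (snd x))) \<longrightarrow> p \<in> saved (loc st p) T) \<and>
 (\<forall>p\<in>C. \<forall>m sn. saved (loc st p) (m,sn,p) \<noteq> {} \<longrightarrow> (m,sn) \<in> bcasts (loc st p)) \<and>
 (\<forall>p\<in>C. \<forall>m1 m2 sn. (m1,sn) \<in> bcasts (loc st p) \<longrightarrow> (m2,sn) \<in> bcasts (loc st p) \<longrightarrow> m1 = m2) \<and>
 (\<forall>q\<in>C. \<forall>m sn j. (m,sn,j) \<in> delivered (loc st q) \<longrightarrow> j \<in> saved (loc st q) (m,sn,j)) \<and>
 (\<forall>q\<in>C. \<forall>sn j. (sn,j) \<in> signedsn (loc st q) \<longrightarrow> (\<exists>m. q \<in> saved (loc st q) (m,sn,j) \<and> j \<in> saved (loc st q) (m,sn,j))) \<and>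
 (\<forall>p\<in>C. \<forall>m sn. (m,sn) \<in> bcasts (loc st p) \<longrightarrow> p \<in> saved (loc st p) (m,sn,p)) \<and>
 (\<forall>q\<in>C. \<forall>m sn j. n + t < 2 * card (saved (loc st q) (m,sn,j)) \<longrightarrow> (\<exists>m'. (m',sn,j) \<in> delivered (loc st q)) \<or> card (saved (loc st q) (m,sn,j)) \<le> 1)"

lemma invA: assumes "minv n t C st" shows "\<forall>q\<in>C. \<forall>T. saved (loc st q) T \<subseteq> {..<n}"
  using assms unfolding minv_def by (elim conjE) assumption

lemma invB: assumes "minv n t C st" shows "\<forall>q\<in>C. \<forall>p\<in>C. \<forall>T. p \<in> saved (loc st q) T \<longrightarrow> p \<in> saved (loc st p) T"
  using assms unfolding minv_def by (elim conjE) assumption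

lemma invC: assumes "minv n t C st" shows "\<forall>x\<in>net st. \<forall>p\<in>C. \<forall>T. (p,T) \<in> msigs (snd (snd (snd x))) \<longrightarrow> p \<in> saved (loc st p) T"
  using assms unfolding minv_def by (elim conjE) assumption

lemma invK: assumes "minv n t C st" shows "\<forall>p\<in>C. \<forall>m sn. saved (loc st p) (m,sn,p) \<noteq> {} \<longrightarrow> (m,sn) \<in> bcasts (loc st p)"
  using assms unfolding minv_def by (elim conjE) assumption

lemma invE: assumes "minv n t C st" shows "\<forall>p\<in>C. \<forall>m1 m2 sn. (m1,sn) \<in> bcasts (loc st p) \<longrightarrow> (m2,sn) \<in> bcasts (loc st p) \<longrightarrow> m1 = m2"
  using assms unfolding minv_def by (elim conjE) assumption

lemma invF: assumes "minv n t C st" shows "\<forall>q\<in>C. \<forall>m sn j. (m,sn,j) \<in> delivered (loc st q) \<longrightarrow> j \<in> saved (loc st q) (m,sn,j)"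
  using assms unfolding minv_def by (elim conjE) assumption

lemma invG: assumes "minv n t C st" shows "\<forall>q\<in>C. \<forall>sn j. (sn,j) \<in> signedsn (loc st q) \<longrightarrow> (\<exists>m. q \<in> saved (loc st q) (m,sn,j) \<and> j \<in> saved (loc st q) (m,sn,j))"
  using assms unfolding minv_def by (elim conjE) assumption

lemma invH: assumes "minv n t C st" shows "\<forall>p\<in>C. \<forall>m sn. (m,sn) \<in> bcasts (loc st p) \<longrightarrow> p \<in> saved (loc st p) (m,sn,p)"
  using assms unfolding minv_def by (elim conjE) assumption

lemma invJ: assumes "minv n t C st" shows "\<forall>q\<in>C. \<forall>m sn j. n + t < 2 * card (saved (loc st q) (m,sn,j)) \<longrightarrow> (\<exists>m'. (m',sn,j) \<in> delivered (loc st q)) \<or> card (saved (loc st q) (m,sn,j)) \<le> 1"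
  using assms unfolding minv_def by (elim conjE) assumption

lemma copies_msg: "x \<in> copies C k i ms Ds \<Longrightarrow> snd (snd (snd x)) \<in> set ms"
  unfolding copies_def by auto

lemma invA': assumes I: "minv n t C st" shows "q \<in> C \<Longrightarrow> saved (loc st q) T \<subseteq> {..<n}"
  using invA[OF I] by blast

lemma invB': assumes I: "minv n t C st" shows "q \<in> C \<Longrightarrow> p \<in> C \<Longrightarrow> p \<in> saved (loc st q) T \<Longrightarrow> p \<in> saved (loc st p) T"
  using invB[OF I] by blast

lemma invC': assumes I: "minv n t C st" shows "x \<in> net st \<Longrightarrow> p \<in> C \<Longrightarrow> (p,T) \<in> msigs (snd (snd (snd x))) \<Longrightarrow> p \<in> saved (loc st p) T"
  using invC[OF I] by blast

lemma invK': assumes I: "minv n t C st" shows "p \<in> C \<Longrightarrow> saved (loc st p) (m,sn,p) \<noteq> {} \<Longrightarrow> (m,sn) \<in> bcasts (loc st p)"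
  using invK[OF I] by blast

lemma invE': assumes I: "minv n t C st" shows "p \<in> C \<Longrightarrow> (m1,sn) \<in> bcasts (loc st p) \<Longrightarrow> (m2,sn) \<in> bcasts (loc st p) \<Longrightarrow> m1 = m2"
  using invE[OF I] by blast

lemma invF': assumes I: "minv n t C st" shows "q \<in> C \<Longrightarrow> (m,sn,j) \<in> delivered (loc st q) \<Longrightarrow> j \<in> saved (loc st q) (m,sn,j)"
  using invF[OF I] by blast

lemma invG': assumes I: "minv n t C st" shows "q \<in> C \<Longrightarrow> (sn,j) \<in> signedsn (loc st q) \<Longrightarrow> (\<exists>m. q \<in> saved (loc st q) (m,sn,j) \<and> j \<in> saved (loc st q) (m,sn,j))"
  using invG[OF I] by blast

lemma invH': assumes I: "minv n t C st" shows "p \<in> C \<Longrightarrow> (m,sn) \<in> bcasts (loc st p) \<Longrightarrow> p \<in> saved (loc st p) (m,sn,p)"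
  using invH[OF I] by blast

lemma invJ': assumes I: "minv n t C st" shows "q \<in> C \<Longrightarrow> n + t < 2 * card (saved (loc st q) (m,sn,j)) \<Longrightarrow> (\<exists>m'. (m',sn,j) \<in> delivered (loc st q)) \<or> card (saved (loc st q) (m,sn,j)) \<le> 1"
  using invJ[OF I] by blast

lemma invI:
  assumes "\<And>q T. q \<in> C \<Longrightarrow> saved (loc st q) T \<subseteq> {..<n}"
    and "\<And>q p T. q \<in> C \<Longrightarrow> p \<in> C \<Longrightarrow> p \<in> saved (loc st q) T \<Longrightarrow> p \<in> saved (loc st p) T"
    and "\<And>x p T. x \<in> net st \<Longrightarrow> p \<in> C \<Longrightarrow> (p,T) \<in> msigs (snd (snd (snd x))) \<Longrightarrow> p \<in> saved (loc st p) T"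
    and "\<And>p m sn. p \<in> C \<Longrightarrow> saved (loc st p) (m,sn,p) \<noteq> {} \<Longrightarrow> (m,sn) \<in> bcasts (loc st p)"
    and "\<And>p m1 m2 sn. p \<in> C \<Longrightarrow> (m1,sn) \<in> bcasts (loc st p) \<Longrightarrow> (m2,sn) \<in> bcasts (loc st p) \<Longrightarrow> m1 = m2"
    and "\<And>q m sn j. q \<in> C \<Longrightarrow> (m,sn,j) \<in> delivered (loc st q) \<Longrightarrow> j \<in> saved (loc st q) (m,sn,j)"
    and "\<And>q sn j. q \<in> C \<Longrightarrow> (sn,j) \<in> signedsn (loc st q) \<Longrightarrow> (\<exists>m. q \<in> saved (loc st q) (m,sn,j) \<and> j \<in> saved (loc st q) (m,sn,j))"
    and "\<And>p m sn. p \<in> C \<Longrightarrow> (m,sn) \<in> bcasts (loc st p) \<Longrightarrow> p \<in> saved (loc st p) (m,sn,p)"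
    and "\<And>q m sn j. q \<in> C \<Longrightarrow> n + t < 2 * card (saved (loc st q) (m,sn,j)) \<Longrightarrow> (\<exists>m'. (m',sn,j) \<in> delivered (loc st q)) \<or> card (saved (loc st q) (m,sn,j)) \<le> 1"
  shows "minv n t C st"
  unfolding minv_def
  apply (intro conjI)
  subgoal using assms(1) by blast
  subgoal using assms(2) by blast
  subgoal using assms(3) by blast
  subgoal using assms(4) by blast
  subgoal using assms(5) by blast
  subgoal using assms(6) by blast
  subgoal using assms(7) by blast
  subgoal using assms(8) by blast
  subgoal using assms(9) by blast
  done

lemma inv_bcast:
  assumes I: "minv n t C st" and CN: "C \<subseteq> {..<n}" and iC: "i \<in> C"
    and fr: "sn \<notin> snd ` bcasts (loc st i)"
    and h: "bcast_handler i m sn (loc st i) = (L', ms)"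
    and st': "st' = \<lparr>loc = (loc st)(i := L'), net = net st \<union> copies C k i ms Ds\<rparr>"
  shows "minv n t C st'"
proof -
  let ?L = "loc st i"
  let ?T = "(m,sn,i)"
  have L': "L' = ?L\<lparr>saved := (saved ?L)(?T := insert i (saved ?L ?T)),
                 signedsn := insert (sn, i) (signedsn ?L),
                 bcasts := insert (m, sn) (bcasts ?L)\<rparr>"
   and ms: "ms = [BUNDLE m sn i (sigs_of (insert i (saved ?L ?T)) ?T)]"
    using h by (simp_all add: bcast_eq)
  have nb: "(m,sn) \<notin> bcasts ?L" using fr by force
  have e: "saved ?L ?T = {}" using invK'[OF I iC] nb by blast
  have SV: "\<And>q T. saved (loc st' q) T = (if q = i \<and> T = ?T then {i} else saved (loc st q) T)"
    using st' L' e by auto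
  have BC: "\<And>q. bcasts (loc st' q) = (if q = i then insert (m,sn) (bcasts (loc st q)) else bcasts (loc st q))"
    using st' L' by auto
  have DL: "\<And>q. delivered (loc st' q) = delivered (loc st q)"
    using st' L' by auto
  have SG: "\<And>q. signedsn (loc st' q) = (if q = i then insert (sn,i) (signedsn (loc st q)) else signedsn (loc st q))"
    using st' L' by auto
  have mono: "\<And>q T. saved (loc st q) T \<subseteq> saved (loc st' q) T" using SV e by auto
  show ?thesis
  proof (rule invI)
    fix q T assume q: "q \<in> C"
    show "saved (loc st' q) T \<subseteq> {..<n}" using SV invA'[OF I q] iC CN by auto
  next
    fix q p T assume q: "q \<in> C" and p: "p \<in> C" and h: "p \<in> saved (loc st' q) T"
    show "p \<in> saved (loc st' p) T"
    proof (cases "q = i \<and> T = ?T")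
      case True thus ?thesis using h SV by auto
    next
      case False
      hence "p \<in> saved (loc st q) T" using h SV by auto
      thus ?thesis using invB'[OF I q p] mono by blast
    qed
  next
    fix x p T assume x: "x \<in> net st'" and pC: "p \<in> C" and pT: "(p,T) \<in> msigs (snd (snd (snd x)))"
    show "p \<in> saved (loc st' p) T"
    proof (cases "x \<in> net st")
      case True thus ?thesis using invC'[OF I True pC pT] mono by blast
    next
      case False
      hence "x \<in> copies C k i ms Ds" using x st' by simp
      hence "snd (snd (snd x)) \<in> set ms" by (rule copies_msg)
      hence "T = ?T" "p \<in> insert i (saved ?L ?T)" using pT ms by (auto simp: sigs_of_def)
      thus ?thesis using e SV by auto
    qed
  next
    fix p m' sn' assume p: "p \<in> C" and ne: "saved (loc st' p) (m',sn',p) \<noteq> {}"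
    show "(m',sn') \<in> bcasts (loc st' p)"
    proof (cases "p = i \<and> (m',sn',p) = ?T")
      case True thus ?thesis using BC by auto
    next
      case False
      hence "saved (loc st p) (m',sn',p) \<noteq> {}" using ne SV by auto
      thus ?thesis using invK'[OF I p] BC by auto
    qed
  next
    fix p m1 m2 sn' assume p: "p \<in> C" and h1: "(m1,sn') \<in> bcasts (loc st' p)" and h2: "(m2,sn') \<in> bcasts (loc st' p)"
    show "m1 = m2"
    proof (cases "p = i")
      case False
      hence "(m1,sn') \<in> bcasts (loc st p)" "(m2,sn') \<in> bcasts (loc st p)" using h1 h2 BC by auto
      thus ?thesis by (rule invE'[OF I p])
    next
      case True
      have fr': "\<And>mm. (mm, sn) \<notin> bcasts (loc st i)" using fr by force
      show ?thesis
      proof (cases "sn' = sn")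
        case True
        thus ?thesis using h1 h2 BC \<open>p = i\<close> fr' by auto
      next
        case False
        hence "(m1,sn') \<in> bcasts (loc st p)" "(m2,sn') \<in> bcasts (loc st p)" using h1 h2 BC by (auto split: if_splits)
        thus ?thesis by (rule invE'[OF I p])
      qed
    qed
  next
    fix q m' sn' j assume q: "q \<in> C" and h: "(m',sn',j) \<in> delivered (loc st' q)"
    show "j \<in> saved (loc st' q) (m',sn',j)" using h DL invF'[OF I q] mono by blast
  next
    fix q sn' j assume q: "q \<in> C" and h: "(sn',j) \<in> signedsn (loc st' q)"
    show "\<exists>m'. q \<in> saved (loc st' q) (m',sn',j) \<and> j \<in> saved (loc st' q) (m',sn',j)"
    proof (cases "q = i \<and> (sn',j) = (sn,i)")
      case True thus ?thesis using SV by auto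
    next
      case False
      hence "(sn',j) \<in> signedsn (loc st q)" using h SG by (auto split: if_splits)
      thus ?thesis using invG'[OF I q] mono by blast
    qed
  next
    fix p m' sn' assume p: "p \<in> C" and h: "(m',sn') \<in> bcasts (loc st' p)"
    show "p \<in> saved (loc st' p) (m',sn',p)"
    proof (cases "p = i \<and> (m',sn') = (m,sn)")
      case True thus ?thesis using SV by auto
    next
      case False
      hence "(m',sn') \<in> bcasts (loc st p)" using h BC by (auto split: if_splits)
      thus ?thesis using invH'[OF I p] mono by blast
    qed
  next
    fix q m' sn' j assume q: "q \<in> C" and h: "n + t < 2 * card (saved (loc st' q) (m',sn',j))"
    show "(\<exists>m''. (m'',sn',j) \<in> delivered (loc st' q)) \<or> card (saved (loc st' q) (m',sn',j)) \<le> 1"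
    proof (cases "q = i \<and> (m',sn',j) = ?T")
      case True thus ?thesis using SV by auto
    next
      case False
      hence "saved (loc st' q) (m',sn',j) = saved (loc st q) (m',sn',j)" using SV by auto
      thus ?thesis using h invJ'[OF I q] DL by auto
    qed
  qed
qed

lemma inv_same:
  assumes I: "minv n t C st" and "loc st' = loc st" and "net st' \<subseteq> net st"
  shows "minv n t C st'"
proof (rule invI)
  note L = assms(2)
  fix q T assume "q \<in> C" thus "saved (loc st' q) T \<subseteq> {..<n}" unfolding L by (rule invA'[OF I])
next
  fix q p T assume "q \<in> C" "p \<in> C" "p \<in> saved (loc st' q) T" thus "p \<in> saved (loc st' p) T" unfolding assms(2) by (rule invB'[OF I])
next
  fix x p T assume "x \<in> net st'" "p \<in> C" "(p,T) \<in> msigs (snd (snd (snd x)))"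
  thus "p \<in> saved (loc st' p) T" unfolding assms(2) using invC'[OF I] assms(3) by blast
next
  fix p m sn assume "p \<in> C" "saved (loc st' p) (m,sn,p) \<noteq> {}" thus "(m,sn) \<in> bcasts (loc st' p)" unfolding assms(2) by (rule invK'[OF I])
next
  fix p m1 m2 sn assume "p \<in> C" "(m1,sn) \<in> bcasts (loc st' p)" "(m2,sn) \<in> bcasts (loc st' p)" thus "m1 = m2" unfolding assms(2) by (rule invE'[OF I])
next
  fix q m sn j assume "q \<in> C" "(m,sn,j) \<in> delivered (loc st' q)" thus "j \<in> saved (loc st' q) (m,sn,j)" unfolding assms(2) by (rule invF'[OF I])
next
  fix q sn j assume "q \<in> C" "(sn,j) \<in> signedsn (loc st' q)" thus "\<exists>m. q \<in> saved (loc st' q) (m,sn,j) \<and> j \<in> saved (loc st' q) (m,sn,j)" unfolding assms(2) by (rule invG'[OF I])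
next
  fix p m sn assume "p \<in> C" "(m,sn) \<in> bcasts (loc st' p)" thus "p \<in> saved (loc st' p) (m,sn,p)" unfolding assms(2) by (rule invH'[OF I])
next
  fix q m sn j assume "q \<in> C" "n + t < 2 * card (saved (loc st' q) (m,sn,j))"
  thus "(\<exists>m'. (m',sn,j) \<in> delivered (loc st' q)) \<or> card (saved (loc st' q) (m,sn,j)) \<le> 1" unfolding assms(2) by (rule invJ'[OF I])
qed

lemma inv_recv:
  assumes I: "minv n t C st" and CN: "C \<subseteq> {..<n}" and xn: "x \<in> net st"
    and xe: "x = (idx, sndr, q0, M)" and q0C: "q0 \<in> C"
    and h: "recv_handler n t q0 M (loc st q0) = (L', ms)"
    and st': "st' = \<lparr>loc = (loc st)(q0 := L'), net = (net st - {x}) \<union> copies C k q0 ms Ds\<rparr>"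
  shows "minv n t C st'"
proof -
  obtain m0 sn0 j0 sigs where M: "M = BUNDLE m0 sn0 j0 sigs" by (cases M) auto
  let ?L = "loc st q0"
  let ?T = "(m0,sn0,j0)"
  define A where "A = newA n q0 m0 sn0 j0 sigs ?L"
  define ns where "ns = ((sn0,j0) \<notin> signedsn ?L)"
  define thr where "thr = (n + t < 2 * card A)"
  show ?thesis
  proof (cases "chk n m0 sn0 j0 sigs ?L")
    case False
    hence "L' = ?L" "ms = []" using h M by (simp_all add: recv_eq)
    hence "loc st' = loc st" "net st' \<subseteq> net st" using st' by (auto simp: copies_def)
    thus ?thesis using inv_same[OF I] by blast
  next
    case ck: True
    have L': "L' = ?L\<lparr>saved := (saved ?L)(?T := A),
        signedsn := (if ns then insert (sn0,j0) (signedsn ?L) else signedsn ?L),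
        delivered := (if thr then insert ?T (delivered ?L) else delivered ?L)\<rparr>"
     and ms: "ms = (if ns then [BUNDLE m0 sn0 j0 (sigs_of A ?T)] else []) @ (if thr then [BUNDLE m0 sn0 j0 (sigs_of A ?T)] else [])"
      using h M ck unfolding A_def ns_def thr_def by (simp_all add: recv_eq Let_def)
    have ckd: "j0 < n" "(j0, ?T) \<in> sigs" "\<not> (\<exists>m'. (m', sn0, j0) \<in> delivered ?L)"
      using ck unfolding chk_def by auto
    have Adef: "A = saved ?L ?T \<union> {k. k < n \<and> (k, ?T) \<in> sigs} \<union> (if ns then {q0} else {})"
      unfolding A_def newA_def ns_def by simp
    have SV: "\<And>q T. saved (loc st' q) T = (if q = q0 \<and> T = ?T then A else saved (loc st q) T)"
      using st' L' by auto
    have BC: "\<And>q. bcasts (loc st' q) = bcasts (loc st q)"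
      using st' L' by auto
    have DL: "\<And>q. delivered (loc st' q) = (if q = q0 \<and> thr then insert ?T (delivered (loc st q)) else delivered (loc st q))"
      using st' L' by auto
    have SG: "\<And>q. signedsn (loc st' q) = (if q = q0 \<and> ns then insert (sn0,j0) (signedsn (loc st q)) else signedsn (loc st q))"
      using st' L' by auto
    have mono: "\<And>q T. saved (loc st q) T \<subseteq> saved (loc st' q) T" using SV Adef by auto
    have msg: "\<And>y. y \<in> copies C k q0 ms Ds \<Longrightarrow> msigs (snd (snd (snd y))) = sigs_of A ?T"
    proof -
      fix y assume "y \<in> copies C k q0 ms Ds"
      hence "snd (snd (snd y)) \<in> set ms" by (rule copies_msg)
      thus "msigs (snd (snd (snd y))) = sigs_of A ?T" using ms by (auto split: if_splits)
    qed
    have Aok: "\<And>p. p \<in> C \<Longrightarrow> p \<in> A \<Longrightarrow> p \<in> saved (loc st' p) ?T"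
    proof -
      fix p assume p: "p \<in> C" and pA: "p \<in> A"
      consider (a) "p \<in> saved ?L ?T" | (b) "(p, ?T) \<in> sigs" | (c) "p = q0"
        using pA Adef by (auto split: if_splits)
      thus "p \<in> saved (loc st' p) ?T"
      proof cases
        case a thus ?thesis using invB'[OF I q0C p] mono by blast
      next
        case b
        have "(p, ?T) \<in> msigs (snd (snd (snd x)))" using b xe M by simp
        thus ?thesis using invC'[OF I xn p] mono by blast
      next
        case c thus ?thesis using SV pA by auto
      qed
    qed
    show ?thesis
    proof (rule invI)
      fix q T assume q: "q \<in> C"
      have "A \<subseteq> {..<n}" using Adef invA'[OF I q0C] q0C CN by auto
      thus "saved (loc st' q) T \<subseteq> {..<n}" using SV invA'[OF I q] by auto
    next
      fix q p T assume q: "q \<in> C" and p: "p \<in> C" and hp: "p \<in> saved (loc st' q) T"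
      show "p \<in> saved (loc st' p) T"
      proof (cases "q = q0 \<and> T = ?T")
        case True thus ?thesis using hp SV Aok p by auto
      next
        case False
        hence "p \<in> saved (loc st q) T" using hp SV by auto
        thus ?thesis using invB'[OF I q p] mono by blast
      qed
    next
      fix y p T assume y: "y \<in> net st'" and pC: "p \<in> C" and pT: "(p,T) \<in> msigs (snd (snd (snd y)))"
      show "p \<in> saved (loc st' p) T"
      proof (cases "y \<in> net st")
        case True thus ?thesis using invC'[OF I True pC pT] mono by blast
      next
        case False
        hence "y \<in> copies C k q0 ms Ds" using y st' by simp
        hence "T = ?T" "p \<in> A" using pT msg by (auto simp: sigs_of_def)
        thus ?thesis using Aok pC by auto
      qed
    next
      fix p m' sn' assume p: "p \<in> C" and ne: "saved (loc st' p) (m',sn',p) \<noteq> {}"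
      show "(m',sn') \<in> bcasts (loc st' p)"
      proof (cases "p = q0 \<and> (m',sn',p) = ?T")
        case True
        hence "(p, ?T) \<in> msigs (snd (snd (snd x)))" using ckd xe M by auto
        hence "p \<in> saved (loc st p) ?T" using invC'[OF I xn p] by blast
        hence "saved (loc st p) (m',sn',p) \<noteq> {}" using True by auto
        thus ?thesis using invK'[OF I p] BC by auto
      next
        case False
        hence "saved (loc st p) (m',sn',p) \<noteq> {}" using ne SV by (auto split: if_splits)
        thus ?thesis using invK'[OF I p] BC by auto
      qed
    next
      fix p m1 m2 sn' assume p: "p \<in> C" and h1: "(m1,sn') \<in> bcasts (loc st' p)" and h2: "(m2,sn') \<in> bcasts (loc st' p)"
      have "(m1,sn') \<in> bcasts (loc st p)" "(m2,sn') \<in> bcasts (loc st p)" using h1 h2 BC by auto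
      thus "m1 = m2" by (rule invE'[OF I p])
    next
      fix q m' sn' j assume q: "q \<in> C" and hd: "(m',sn',j) \<in> delivered (loc st' q)"
      show "j \<in> saved (loc st' q) (m',sn',j)"
      proof (cases "q = q0 \<and> thr \<and> (m',sn',j) = ?T")
        case True thus ?thesis using SV Adef ckd by auto
      next
        case False
        hence "(m',sn',j) \<in> delivered (loc st q)" using hd DL by (auto split: if_splits)
        thus ?thesis using invF'[OF I q] mono by blast
      qed
    next
      fix q sn' j assume q: "q \<in> C" and hs: "(sn',j) \<in> signedsn (loc st' q)"
      show "\<exists>m'. q \<in> saved (loc st' q) (m',sn',j) \<and> j \<in> saved (loc st' q) (m',sn',j)"
      proof (cases "q = q0 \<and> ns \<and> (sn',j) = (sn0,j0)")
        case True
        hence "q \<in> saved (loc st' q) ?T" "j \<in> saved (loc st' q) ?T" using SV Adef ckd by auto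
        thus ?thesis using True by auto
      next
        case False
        hence "(sn',j) \<in> signedsn (loc st q)" using hs SG by (auto split: if_splits)
        thus ?thesis using invG'[OF I q] mono by blast
      qed
    next
      fix p m' sn' assume p: "p \<in> C" and hb: "(m',sn') \<in> bcasts (loc st' p)"
      hence "(m',sn') \<in> bcasts (loc st p)" using BC by auto
      thus "p \<in> saved (loc st' p) (m',sn',p)" using invH'[OF I p] mono by blast
    next
      fix q m' sn' j assume q: "q \<in> C" and hc: "n + t < 2 * card (saved (loc st' q) (m',sn',j))"
      show "(\<exists>m''. (m'',sn',j) \<in> delivered (loc st' q)) \<or> card (saved (loc st' q) (m',sn',j)) \<le> 1"
      proof (cases "q = q0 \<and> (m',sn',j) = ?T")
        case True
        hence "thr" using hc SV thr_def by auto
        thus ?thesis using True DL by auto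
      next
        case False
        hence e: "saved (loc st' q) (m',sn',j) = saved (loc st q) (m',sn',j)" using SV by auto
        hence "(\<exists>m''. (m'',sn',j) \<in> delivered (loc st q)) \<or> card (saved (loc st q) (m',sn',j)) \<le> 1"
          using hc invJ'[OF I q] by auto
        thus ?thesis using e DL by auto
      qed
    qed
  qed
qed

lemma inv_step:
  assumes I: "minv n t C st" and CN: "C \<subseteq> {..<n}" and S: "step n t d C k st st'"
  shows "minv n t C st'"
  using S unfolding step_def
proof (elim disjE exE conjE bexE)
  fix i m sn L' ms Ds
  assume "i \<in> C" "sn \<notin> snd ` bcasts (loc st i)" "bcast_handler i m sn (loc st i) = (L', ms)"
    "st' = \<lparr>loc = (loc st)(i := L'), net = net st \<union> copies C k i ms Ds\<rparr>"
  thus ?thesis using inv_bcast[OF I CN] by blast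
next
  fix x idx sndr i M L' ms Ds
  assume "x \<in> net st" "x = (idx, sndr, i, M)" "i \<in> C" "recv_handler n t i M (loc st i) = (L', ms)"
    "st' = \<lparr>loc = (loc st)(i := L'), net = (net st - {x}) \<union> copies C k i ms Ds\<rparr>"
  thus ?thesis using inv_recv[OF I CN] by blast
next
  fix b i m sn j sigs
  assume sg: "\<forall>(k, T)\<in>sigs. k \<in> C \<longrightarrow> k \<in> saved (loc st k) T"
    and st': "st' = st\<lparr>net := insert ((k, 0), b, i, BUNDLE m sn j sigs) (net st)\<rparr>"
  show ?thesis
  proof (rule invI)
    fix x p T assume "x \<in> net st'" "p \<in> C" "(p,T) \<in> msigs (snd (snd (snd x)))"
    note hs = this
    show "p \<in> saved (loc st' p) T"
    proof (cases "x \<in> net st")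
      case True thus ?thesis using invC'[OF I True] hs st' by simp
    next
      case False
      hence "x = ((k, 0), b, i, BUNDLE m sn j sigs)" using hs st' by simp
      hence "(p,T) \<in> sigs" using hs by simp
      thus ?thesis using sg hs st' by auto
    qed
  qed (use I st' in \<open>auto dest: invA' invB' invK' invE' invF' invG' invH' invJ'\<close>)
next
  assume "st' = st" thus ?thesis using I by simp
qed




lemma exec_props:
  assumes E: "mbrb_exec n t d C s"
  shows exec_C: "C \<subseteq> {..<n}" and exec_card: "n - t \<le> card C" and exec_d: "d < card C"
    and exec_0: "s 0 = gstate0" and exec_step: "step n t d C k (s k) (s (Suc k))"
  using E unfolding mbrb_exec_def by simp_all

lemma exec_fair:
  assumes E: "mbrb_exec n t d C s" and "x \<in> net (s k)" "fst (snd x) \<in> C"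
  shows "\<exists>k'\<ge>k. x \<notin> net (s k')"
proof -
  have "\<forall>k x. x \<in> net (s k) \<longrightarrow> fst (snd x) \<in> C \<longrightarrow> (\<exists>k'\<ge>k. x \<notin> net (s k'))"
    using E unfolding mbrb_exec_def by (elim conjE) assumption
  thus ?thesis using assms(2,3) by blast
qed

lemma step_mono:
  assumes S: "step n t d C k st st'"
  shows "saved (loc st q) T \<subseteq> saved (loc st' q) T \<and> delivered (loc st q) \<subseteq> delivered (loc st' q) \<and> bcasts (loc st q) \<subseteq> bcasts (loc st' q)"
  using S unfolding step_def
proof (elim disjE exE conjE bexE)
  fix i m sn L' ms Ds
  assume h: "bcast_handler i m sn (loc st i) = (L', ms)"
    and st': "st' = \<lparr>loc = (loc st)(i := L'), net = net st \<union> copies C k i ms Ds\<rparr>"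
  thus ?thesis by (auto simp: bcast_eq)
next
  fix x idx sndr i M L' ms Ds
  assume h: "recv_handler n t i M (loc st i) = (L', ms)"
    and st': "st' = \<lparr>loc = (loc st)(i := L'), net = (net st - {x}) \<union> copies C k i ms Ds\<rparr>"
  obtain m0 sn0 j0 sigs where M: "M = BUNDLE m0 sn0 j0 sigs" by (cases M) auto
  show ?thesis
  proof (cases "q = i")
    case False thus ?thesis using st' by simp
  next
    case True
    show ?thesis
    proof (cases "chk n m0 sn0 j0 sigs (loc st i)")
      case False thus ?thesis using h M st' True by (simp add: recv_eq)
    next
      case ck: True
      let ?L = "loc st i"
      let ?A = "newA n i m0 sn0 j0 sigs ?L"
      have L': "L' = ?L\<lparr>saved := (saved ?L)((m0,sn0,j0) := ?A),
        signedsn := (if (sn0,j0) \<notin> signedsn ?L then insert (sn0,j0) (signedsn ?L) else signedsn ?L),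
        delivered := (if n + t < 2 * card ?A then insert (m0,sn0,j0) (delivered ?L) else delivered ?L)\<rparr>"
        using h M ck by (simp add: recv_eq Let_def)
      have "saved ?L (m0,sn0,j0) \<subseteq> ?A" unfolding newA_def by blast
      thus ?thesis using L' st' True by auto
    qed
  qed
next
  fix b i m sn j sigs
  assume "st' = st\<lparr>net := insert ((k, 0), b, i, BUNDLE m sn j sigs) (net st)\<rparr>"
  thus ?thesis by simp
next
  assume "st' = st" thus ?thesis by simp
qed

lemma exec_mono:
  assumes E: "mbrb_exec n t d C s" and le: "a \<le> b"
  shows "saved (loc (s a) q) T \<subseteq> saved (loc (s b) q) T \<and> delivered (loc (s a) q) \<subseteq> delivered (loc (s b) q) \<and> bcasts (loc (s a) q) \<subseteq> bcasts (loc (s b) q)"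
  using le
proof (induction b rule: dec_induct)
  case base thus ?case by simp
next
  case (step b)
  have "step n t d C b (s b) (s (Suc b))" by (rule exec_step[OF E])
  from step_mono[OF this, of q T] step.IH show ?case by blast
qed

lemma inv0: "minv n t C gstate0"
  unfolding minv_def gstate0_def lstate0_def by simp

lemma exec_inv:
  assumes E: "mbrb_exec n t d C s"
  shows "minv n t C (s k)"
proof (induction k)
  case 0 thus ?case using exec_0[OF E] inv0 by simp
next
  case (Suc k)
  have "step n t d C k (s k) (s (Suc k))" "C \<subseteq> {..<n}" using exec_step[OF E] exec_C[OF E] by blast+
  thus ?case using inv_step Suc by blast
qed

lemma first_time:
  fixes P :: "nat \<Rightarrow> bool"
  assumes "\<not> P 0" "P k" shows "\<exists>k0. \<not> P k0 \<and> P (Suc k0)"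
  using assms by (induction k) auto

lemma net_removed:
  assumes "x \<in> net (s a)" "x \<notin> net (s b)" "a \<le> b"
  shows "\<exists>k1\<ge>a. x \<in> net (s k1) \<and> x \<notin> net (s (Suc k1))"
  using assms(3,2)
proof (induction b rule: dec_induct)
  case base thus ?case using assms(1) by simp
next
  case (step b)
  show ?case
  proof (cases "x \<in> net (s b)")
    case True thus ?thesis using step by auto
  next
    case False thus ?thesis using step by auto
  qed
qed

lemma step_remove:
  assumes S: "step n t d C k st st'" and x: "x \<in> net st" "x \<notin> net st'"
    and xe: "x = (idx, sndr, dst, M)"
  shows "\<exists>L' ms. dst \<in> C \<and> recv_handler n t dst M (loc st dst) = (L', ms) \<and> loc st' dst = L'"
  using S unfolding step_def
proof (elim disjE exE conjE bexE)
  fix i m sn L' ms Ds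
  assume "st' = \<lparr>loc = (loc st)(i := L'), net = net st \<union> copies C k i ms Ds\<rparr>"
  thus ?thesis using x by simp
next
  fix x' idx' sndr' i M' L' ms Ds
  assume a: "x' = (idx', sndr', i, M')" "i \<in> C" "recv_handler n t i M' (loc st i) = (L', ms)"
    and st': "st' = \<lparr>loc = (loc st)(i := L'), net = (net st - {x'}) \<union> copies C k i ms Ds\<rparr>"
  have "x = x'" using x st' by auto
  thus ?thesis using a xe st' by auto
next
  fix b i m sn j sigs
  assume "st' = st\<lparr>net := insert ((k, 0), b, i, BUNDLE m sn j sigs) (net st)\<rparr>"
  thus ?thesis using x by simp
next
  assume "st' = st" thus ?thesis using x by simp
qed

lemma sum_card_swap:
  assumes "finite S"
  shows "(\<Sum>q\<in>S. card {p\<in>S. P p q}) = (\<Sum>p\<in>S. card {q\<in>S. P p q})"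
proof -
  have e: "\<And>(A::'a set) Q. finite A \<Longrightarrow> card {p\<in>A. Q p} = (\<Sum>p\<in>A. if Q p then 1 else 0)"
  proof -
    fix A Q assume "finite A"
    have "{p\<in>A. Q p} = A \<inter> {p. Q p}" by blast
    moreover have "(\<Sum>p\<in>A. if Q p then 1 else 0) = (\<Sum>p\<in>A \<inter> {p. Q p}. 1) + (\<Sum>p\<in>A \<inter> - {p. Q p}. (0::nat))"
      using sum.If_cases[OF \<open>finite A\<close>, of Q "\<lambda>_. 1::nat" "\<lambda>_. 0"] by simp
    ultimately show "card {p\<in>A. Q p} = (\<Sum>p\<in>A. if Q p then 1 else 0)" by simp
  qed
  have "(\<Sum>q\<in>S. card {p\<in>S. P p q}) = (\<Sum>q\<in>S. \<Sum>p\<in>S. if P p q then 1 else 0)"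
    using e[OF assms] by simp
  also have "\<dots> = (\<Sum>p\<in>S. \<Sum>q\<in>S. if P p q then 1 else 0)" by (rule sum.swap)
  also have "\<dots> = (\<Sum>p\<in>S. card {q\<in>S. P p q})" using e[OF assms] by simp
  finally show ?thesis .
qed

lemma uniform_time0:
  fixes P :: "'a \<Rightarrow> nat \<Rightarrow> bool"
  assumes "finite R" "\<forall>x\<in>R. \<exists>k. \<forall>k'\<ge>k. P x k'"
  shows "\<exists>K. \<forall>x\<in>R. \<forall>k'\<ge>K. P x k'"
  using assms
proof (induction R rule: finite_induct)
  case empty thus ?case by simp
next
  case (insert a R)
  then obtain K where K: "\<forall>x\<in>R. \<forall>k'\<ge>K. P x k'" by auto
  obtain Ka where Ka: "\<forall>k'\<ge>Ka. P a k'" using insert by auto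
  have "\<forall>x\<in>insert a R. \<forall>k'\<ge>max K Ka. P x k'"
  proof (intro ballI allI impI)
    fix x k' assume x: "x \<in> insert a R" and k': "max K Ka \<le> k'"
    hence "K \<le> k'" "Ka \<le> k'" by auto
    thus "P x k'" using x K Ka by auto
  qed
  thus ?case by blast
qed

lemma uniform_time:
  fixes P :: "'a \<Rightarrow> nat \<Rightarrow> bool"
  assumes "finite R" "\<forall>x\<in>R. \<exists>k. \<forall>k'\<ge>k. P x k'"
  shows "\<exists>K. \<forall>x\<in>R. P x K"
  using uniform_time0[OF assms] by blast




lemma only_m:
  assumes E: "mbrb_exec n t d C s" and iC: "i \<in> C" and B: "(m, sn) \<in> bcasts (loc (s k) i)"
    and q: "q \<in> C" and h: "i \<in> saved (loc (s k') q) (m',sn,i)"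
  shows "m' = m"
proof -
  have I': "minv n t C (s k')" by (rule exec_inv[OF E])
  have "i \<in> saved (loc (s k') i) (m',sn,i)" by (rule invB'[OF I' q iC h])
  hence "saved (loc (s k') i) (m',sn,i) \<noteq> {}" by blast
  hence b1: "(m',sn) \<in> bcasts (loc (s k') i)" by (rule invK'[OF I' iC])
  have "bcasts (loc (s k') i) \<subseteq> bcasts (loc (s (max k k')) i)" using exec_mono[OF E, of k' "max k k'" i] by simp
  hence b1': "(m',sn) \<in> bcasts (loc (s (max k k')) i)" using b1 by blast
  have "bcasts (loc (s k) i) \<subseteq> bcasts (loc (s (max k k')) i)" using exec_mono[OF E, of k "max k k'" i] by simp
  hence b2: "(m,sn) \<in> bcasts (loc (s (max k k')) i)" using B by blast
  show ?thesis by (rule invE'[OF exec_inv[OF E] iC b1' b2])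
qed

lemma deliv_m:
  assumes E: "mbrb_exec n t d C s" and iC: "i \<in> C" and B: "(m, sn) \<in> bcasts (loc (s k) i)"
    and q: "q \<in> C" and h: "(m',sn,i) \<in> delivered (loc (s k') q)"
  shows "m' = m"
proof -
  have "i \<in> saved (loc (s k') q) (m',sn,i)" by (rule invF'[OF exec_inv[OF E] q h])
  thus ?thesis by (rule only_m[OF E iC B q])
qed

lemma first_sign:
  assumes E: "mbrb_exec n t d C s" and pC: "p \<in> C" and iC: "i \<in> C"
    and h0: "p \<notin> saved (loc (s k0) p) (m,sn,i)" and h1: "p \<in> saved (loc (s (Suc k0)) p) (m,sn,i)"
  shows "\<exists>ms Ds X. adv_ok C d ms Ds \<and> copies C k0 p ms Ds \<subseteq> net (s (Suc k0)) \<and> ms \<noteq> []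
           \<and> ms ! 0 = BUNDLE m sn i (sigs_of X (m,sn,i)) \<and> p \<in> X \<and> i \<in> X"
proof -
  let ?T = "(m,sn,i)"
  have I: "minv n t C (s k0)" by (rule exec_inv[OF E])
  have CN: "C \<subseteq> {..<n}" by (rule exec_C[OF E])
  have "step n t d C k0 (s k0) (s (Suc k0))" by (rule exec_step[OF E])
  thus ?thesis unfolding step_def
  proof (elim disjE exE conjE bexE)
    fix i' m' sn' L' ms Ds
    assume a: "i' \<in> C" "bcast_handler i' m' sn' (loc (s k0) i') = (L', ms)" "adv_ok C d ms Ds"
      and st': "s (Suc k0) = \<lparr>loc = (loc (s k0))(i' := L'), net = net (s k0) \<union> copies C k0 i' ms Ds\<rparr>"
    have ip: "i' = p" using h0 h1 st' by (cases "i' = p") auto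
    let ?L = "loc (s k0) p"
    have L': "L' = ?L\<lparr>saved := (saved ?L)((m',sn',p) := insert p (saved ?L (m',sn',p))),
                 signedsn := insert (sn', p) (signedsn ?L),
                 bcasts := insert (m', sn') (bcasts ?L)\<rparr>"
     and ms: "ms = [BUNDLE m' sn' p (sigs_of (insert p (saved ?L (m',sn',p))) (m',sn',p))]"
      using a(2) ip by (simp_all add: bcast_eq)
    have "?T = (m',sn',p)"
    proof (rule ccontr)
      assume "?T \<noteq> (m',sn',p)"
      hence "saved (loc (s (Suc k0)) p) ?T = saved ?L ?T" using st' L' ip by auto
      thus False using h0 h1 by simp
    qed
    hence eq: "m' = m" "sn' = sn" "i = p" by auto
    have "copies C k0 p ms Ds \<subseteq> net (s (Suc k0))" using st' ip by auto
    thus ?thesis using a(3) ms eq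
      by (intro exI[of _ ms] exI[of _ Ds] exI[of _ "insert p (saved ?L (m',sn',p))"]) auto
  next
    fix x idx sndr i' M L' ms Ds
    assume a: "x \<in> net (s k0)" "x = (idx, sndr, i', M)" "i' \<in> C"
      "recv_handler n t i' M (loc (s k0) i') = (L', ms)" "adv_ok C d ms Ds"
      and st': "s (Suc k0) = \<lparr>loc = (loc (s k0))(i' := L'), net = (net (s k0) - {x}) \<union> copies C k0 i' ms Ds\<rparr>"
    have ip: "i' = p" using h0 h1 st' by (cases "i' = p") auto
    obtain m0 sn0 j0 sigs where M: "M = BUNDLE m0 sn0 j0 sigs" by (cases M) auto
    let ?L = "loc (s k0) p"
    let ?A = "newA n p m0 sn0 j0 sigs ?L"
    let ?ns = "(sn0,j0) \<notin> signedsn ?L"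
    let ?thr = "n + t < 2 * card ?A"
    show ?thesis
    proof (cases "chk n m0 sn0 j0 sigs ?L")
      case False
      hence "L' = ?L" using a(4) M ip by (simp add: recv_eq)
      hence "loc (s (Suc k0)) p = ?L" using st' ip by simp
      thus ?thesis using h0 h1 by simp
    next
      case ck: True
      have L': "L' = ?L\<lparr>saved := (saved ?L)((m0,sn0,j0) := ?A),
        signedsn := (if ?ns then insert (sn0,j0) (signedsn ?L) else signedsn ?L),
        delivered := (if ?thr then insert (m0,sn0,j0) (delivered ?L) else delivered ?L)\<rparr>"
       and ms: "ms = (if ?ns then [BUNDLE m0 sn0 j0 (sigs_of ?A (m0,sn0,j0))] else []) @ (if ?thr then [BUNDLE m0 sn0 j0 (sigs_of ?A (m0,sn0,j0))] else [])"
        using a(4) M ck ip by (simp_all add: recv_eq Let_def)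
      have "?T = (m0,sn0,j0)"
      proof (rule ccontr)
        assume "?T \<noteq> (m0,sn0,j0)"
        hence "saved (loc (s (Suc k0)) p) ?T = saved ?L ?T" using st' L' ip by auto
        thus False using h0 h1 by simp
      qed
      hence eq: "m0 = m" "sn0 = sn" "j0 = i" by auto
      have pA: "p \<in> ?A" using h1 st' L' ip eq by simp
      have "(p, ?T) \<notin> sigs"
      proof
        assume "(p, ?T) \<in> sigs"
        hence "(p, ?T) \<in> msigs (snd (snd (snd x)))" using a(2) M by simp
        hence "p \<in> saved ?L ?T" using invC'[OF I a(1) pC] by blast
        thus False using h0 by simp
      qed
      hence ns: ?ns using pA h0 eq unfolding newA_def by (auto split: if_splits)
      have ckd: "j0 < n" "(j0, (m0,sn0,j0)) \<in> sigs" using ck unfolding chk_def by auto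
      have iA: "i \<in> ?A" using ckd eq unfolding newA_def by auto
      have "copies C k0 p ms Ds \<subseteq> net (s (Suc k0))" using st' ip by auto
      thus ?thesis using a(5) ms eq ns pA iA
        by (intro exI[of _ ms] exI[of _ Ds] exI[of _ ?A]) auto
    qed
  next
    fix b i' m' sn' j sigs
    assume "s (Suc k0) = (s k0)\<lparr>net := insert ((k0, 0), b, i', BUNDLE m' sn' j sigs) (net (s k0))\<rparr>"
    thus ?thesis using h0 h1 by simp
  next
    assume "s (Suc k0) = s k0" thus ?thesis using h0 h1 by simp
  qed
qed




lemma key:
  assumes E: "mbrb_exec n t d C s" and iC: "i \<in> C" and B: "(m, sn) \<in> bcasts (loc (s k) i)"
    and ND: "\<forall>q\<in>C. \<forall>k'. (m,sn,i) \<notin> delivered (loc (s k') q)"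
    and pC: "p \<in> C" and ps: "p \<in> saved (loc (s kp) p) (m,sn,i)"
  shows "\<exists>Q. Q \<subseteq> C \<and> card C - d \<le> card Q \<and>
     (\<forall>q\<in>Q. (\<exists>k. q \<in> saved (loc (s k) q) (m,sn,i)) \<and>
             (\<exists>k1. p \<in> saved (loc (s k1) q) (m,sn,i) \<and> 2 * card (saved (loc (s k1) q) (m,sn,i)) \<le> n + t))"
proof -
  let ?T = "(m,sn,i)"
  have CN: "C \<subseteq> {..<n}" by (rule exec_C[OF E])
  have fC: "finite C" using CN finite_subset by blast
  have "\<not> (p \<in> saved (loc (s 0) p) ?T)" using exec_0[OF E] by (simp add: gstate0_def lstate0_def)
  then obtain k0 where k0: "p \<notin> saved (loc (s k0) p) ?T" "p \<in> saved (loc (s (Suc k0)) p) ?T"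
    using first_time[of "\<lambda>k. p \<in> saved (loc (s k) p) ?T" kp] ps by blast
  obtain ms Ds X where fs: "adv_ok C d ms Ds" "copies C k0 p ms Ds \<subseteq> net (s (Suc k0))" "ms \<noteq> []"
     "ms ! 0 = BUNDLE m sn i (sigs_of X ?T)" "p \<in> X" "i \<in> X"
    using first_sign[OF E pC iC k0] by blast
  define D where "D = Ds ! 0"
  have "length Ds = length ms" using fs(1) unfolding adv_ok_def by simp
  hence "D \<in> set Ds" using fs(3) unfolding D_def by (simp add: nth_mem)
  hence DC: "D \<subseteq> C" "card D \<le> d" using fs(1) unfolding adv_ok_def by auto
  define Q where "Q = C - D"
  have "card Q = card C - card D" unfolding Q_def using DC fC by (simp add: card_Diff_subset finite_subset)
  hence cQ: "card C - d \<le> card Q" using DC by simp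
  have "\<forall>q\<in>Q. (\<exists>k. q \<in> saved (loc (s k) q) ?T) \<and>
             (\<exists>k1. p \<in> saved (loc (s k1) q) ?T \<and> 2 * card (saved (loc (s k1) q) ?T) \<le> n + t)"
  proof
    fix q assume qQ: "q \<in> Q"
    define y where "y = ((k0, 0::nat), p, q, ms ! 0)"
    have "y \<in> copies C k0 p ms Ds" unfolding y_def copies_def using qQ fs(3) unfolding Q_def D_def by auto
    hence yn: "y \<in> net (s (Suc k0))" using fs(2) by blast
    then obtain k' where "k' \<ge> Suc k0" "y \<notin> net (s k')" using exec_fair[OF E yn] pC unfolding y_def by auto
    then obtain k1 where k1: "k1 \<ge> Suc k0" "y \<in> net (s k1)" "y \<notin> net (s (Suc k1))"
      using net_removed[of y s "Suc k0" k'] yn by blast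
    obtain L' ms' where r: "q \<in> C" "recv_handler n t q (ms ! 0) (loc (s k1) q) = (L', ms')" "loc (s (Suc k1)) q = L'"
      using step_remove[OF exec_step[OF E] k1(2,3)] unfolding y_def by blast
    let ?L = "loc (s k1) q"
    let ?A = "newA n q m sn i (sigs_of X ?T) ?L"
    let ?ns = "(sn,i) \<notin> signedsn ?L"
    let ?thr = "n + t < 2 * card ?A"
    have nd: "\<not> (\<exists>m'. (m', sn, i) \<in> delivered ?L)"
    proof
      assume "\<exists>m'. (m', sn, i) \<in> delivered ?L"
      then obtain m' where m': "(m', sn, i) \<in> delivered ?L" by blast
      hence "m' = m" using deliv_m[OF E iC B r(1)] by blast
      thus False using m' ND r(1) by blast
    qed
    have ck: "chk n m sn i (sigs_of X ?T) ?L" unfolding chk_def using nd iC CN fs(6) by (auto simp: sigs_of_def)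
    have L': "L' = ?L\<lparr>saved := (saved ?L)(?T := ?A),
        signedsn := (if ?ns then insert (sn,i) (signedsn ?L) else signedsn ?L),
        delivered := (if ?thr then insert ?T (delivered ?L) else delivered ?L)\<rparr>"
      using r(2) fs(4) ck by (simp add: recv_eq Let_def)
    have sv: "saved (loc (s (Suc k1)) q) ?T = ?A" using r(3) L' by simp
    have pA: "p \<in> ?A" unfolding newA_def using fs(5) pC CN by (auto simp: sigs_of_def)
    have nthr: "\<not> ?thr"
    proof
      assume ?thr
      hence "?T \<in> delivered (loc (s (Suc k1)) q)" using r(3) L' by simp
      thus False using ND r(1) by blast
    qed
    have qs: "\<exists>k. q \<in> saved (loc (s k) q) ?T"
    proof (cases ?ns)
      case True
      hence "q \<in> ?A" unfolding newA_def by simp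
      thus ?thesis using sv by blast
    next
      case False
      then obtain m' where m': "q \<in> saved ?L (m',sn,i)" "i \<in> saved ?L (m',sn,i)"
        using invG'[OF exec_inv[OF E] r(1)] by blast
      have "m' = m" by (rule only_m[OF E iC B r(1) m'(2)])
      thus ?thesis using m'(1) by blast
    qed
    show "(\<exists>k. q \<in> saved (loc (s k) q) ?T) \<and>
             (\<exists>k1. p \<in> saved (loc (s k1) q) ?T \<and> 2 * card (saved (loc (s k1) q) ?T) \<le> n + t)"
      using qs sv pA nthr by (metis not_less)
  qed
  moreover have "Q \<subseteq> C" unfolding Q_def by blast
  ultimately show ?thesis using cQ by blast
qed




theorem mainTheorem5:
  fixes s :: "nat \<Rightarrow> 'm gstate"
  assumes "n > 3 * t + 2 * d"
    and "mbrb_exec n t d C s"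
    and "i \<in> C"
    and "(m, sn) \<in> bcasts (loc (s k) i)"
  shows "\<exists>j\<in>C. \<exists>k'. (m, sn, i) \<in> delivered (loc (s k') j)"
proof (rule ccontr)
  assume "\<not> ?thesis"
  hence ND: "\<forall>q\<in>C. \<forall>k'. (m,sn,i) \<notin> delivered (loc (s k') q)" by blast
  note E = assms(2) and iC = assms(3) and B = assms(4)
  let ?T = "(m,sn,i)"
  have CN: "C \<subseteq> {..<n}" by (rule exec_C[OF E])
  have fC: "finite C" using CN finite_subset by blast
  define c where "c = card C"
  have cn: "n - t \<le> c" "d < c" using exec_card[OF E] exec_d[OF E] unfolding c_def by auto
  have arith: "n + t < 2 * (c - d)" using cn assms(1) by linarith
  define S where "S = {p\<in>C. \<exists>k. p \<in> saved (loc (s k) p) ?T}"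
  have SC: "S \<subseteq> C" unfolding S_def by blast
  have fS: "finite S" using SC fC finite_subset by blast
  have iS: "i \<in> S" unfolding S_def using iC invH'[OF exec_inv[OF E] iC B] by blast
  have ex: "\<forall>p\<in>S. \<exists>Q. Q \<subseteq> C \<and> card C - d \<le> card Q \<and>
     (\<forall>q\<in>Q. (\<exists>k. q \<in> saved (loc (s k) q) ?T) \<and>
             (\<exists>k1. p \<in> saved (loc (s k1) q) ?T \<and> 2 * card (saved (loc (s k1) q) ?T) \<le> n + t))"
  proof
    fix p assume "p \<in> S"
    then obtain kp where "p \<in> C" "p \<in> saved (loc (s kp) p) ?T" unfolding S_def by blast
    thus "\<exists>Q. Q \<subseteq> C \<and> card C - d \<le> card Q \<and>
     (\<forall>q\<in>Q. (\<exists>k. q \<in> saved (loc (s k) q) ?T) \<and>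
             (\<exists>k1. p \<in> saved (loc (s k1) q) ?T \<and> 2 * card (saved (loc (s k1) q) ?T) \<le> n + t))"
      using key[OF E iC B ND] by blast
  qed
  obtain Qf where Qf: "\<forall>p\<in>S. Qf p \<subseteq> C \<and> card C - d \<le> card (Qf p) \<and>
     (\<forall>q\<in>Qf p. (\<exists>k. q \<in> saved (loc (s k) q) ?T) \<and>
             (\<exists>k1. p \<in> saved (loc (s k1) q) ?T \<and> 2 * card (saved (loc (s k1) q) ?T) \<le> n + t))"
    using bchoice[OF ex] by blast
  have QS: "\<And>p. p \<in> S \<Longrightarrow> Qf p \<subseteq> S" using Qf unfolding S_def by blast
  define R where "R = {(p,q). p \<in> S \<and> q \<in> S \<and> (\<exists>k1. p \<in> saved (loc (s k1) q) ?T)}"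
  have fR: "finite R"
  proof -
    have "R \<subseteq> S \<times> S" unfolding R_def by auto
    thus ?thesis using fS finite_subset by blast
  qed
  have "\<forall>x\<in>R. \<exists>k. \<forall>k'\<ge>k. fst x \<in> saved (loc (s k') (snd x)) ?T"
  proof
    fix x assume "x \<in> R"
    then obtain k1 where k1: "fst x \<in> saved (loc (s k1) (snd x)) ?T" unfolding R_def by auto
    have "\<forall>k'\<ge>k1. fst x \<in> saved (loc (s k') (snd x)) ?T"
    proof (intro allI impI)
      fix k' assume "k1 \<le> k'"
      hence "saved (loc (s k1) (snd x)) ?T \<subseteq> saved (loc (s k') (snd x)) ?T"
        using exec_mono[OF E \<open>k1 \<le> k'\<close>, of "snd x" ?T] by (elim conjE)
      thus "fst x \<in> saved (loc (s k') (snd x)) ?T" using k1 by (rule subsetD)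
    qed
    thus "\<exists>k. \<forall>k'\<ge>k. fst x \<in> saved (loc (s k') (snd x)) ?T" by blast
  qed
  then obtain K where K: "\<forall>x\<in>R. fst x \<in> saved (loc (s K) (snd x)) ?T"
    using uniform_time[OF fR, of "\<lambda>x k'. fst x \<in> saved (loc (s k') (snd x)) ?T"] by blast
  define P where "P = (\<lambda>p q. p \<in> saved (loc (s K) q) ?T)"
  have sub: "\<And>p. p \<in> S \<Longrightarrow> Qf p \<subseteq> {q\<in>S. P p q}"
  proof
    fix p q assume p: "p \<in> S" and q: "q \<in> Qf p"
    hence "q \<in> S" using QS by blast
    moreover have "\<exists>k1. p \<in> saved (loc (s k1) q) ?T" using Qf p q by blast
    ultimately have "(p,q) \<in> R" unfolding R_def using p by blast
    thus "q \<in> {q\<in>S. P p q}" using K \<open>q \<in> S\<close> unfolding P_def by auto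
  qed
  have "\<exists>q\<in>S. c - d \<le> card {p\<in>S. P p q}"
  proof (rule ccontr)
    assume "\<not> ?thesis"
    hence lt: "\<forall>q\<in>S. card {p\<in>S. P p q} < c - d" by auto
    have "(\<Sum>q\<in>S. card {p\<in>S. P p q}) < (\<Sum>q\<in>S. c - d)"
    proof (rule sum_strict_mono[OF fS])
      show "S \<noteq> {}" using iS by blast
    next
      fix q assume "q \<in> S" thus "card {p\<in>S. P p q} < c - d" using lt by blast
    qed
    also have "\<dots> \<le> (\<Sum>p\<in>S. card (Qf p))"
      using Qf unfolding c_def by (intro sum_mono) blast
    also have "\<dots> \<le> (\<Sum>p\<in>S. card {q\<in>S. P p q})"
      using sub fS by (intro sum_mono card_mono) auto
    also have "\<dots> = (\<Sum>q\<in>S. card {p\<in>S. P p q})" by (rule sum_card_swap[OF fS, symmetric])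
    finally show False by simp
  qed
  then obtain q where qS: "q \<in> S" and cq: "c - d \<le> card {p\<in>S. P p q}" by blast
  have qC: "q \<in> C" using qS SC by blast
  have IK: "minv n t C (s K)" by (rule exec_inv[OF E])
  have fin: "finite (saved (loc (s K) q) ?T)" using invA'[OF IK qC] finite_subset by blast
  have "card {p\<in>S. P p q} \<le> card (saved (loc (s K) q) ?T)"
    using fin unfolding P_def by (intro card_mono) auto
  hence big: "n + t < 2 * card (saved (loc (s K) q) ?T)" using cq arith by linarith
  from invJ'[OF IK qC big]
  show False
  proof
    assume "\<exists>m'. (m', sn, i) \<in> delivered (loc (s K) q)"
    then obtain m' where m': "(m', sn, i) \<in> delivered (loc (s K) q)" by blast
    hence "m' = m" using deliv_m[OF E iC B qC] by blast
    thus False using m' ND qC by blast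
  next
    assume c1: "card (saved (loc (s K) q) ?T) \<le> 1"
    hence nt: "n + t \<le> 1" using big by linarith
    have "c - d \<le> card (Qf i)" using Qf iS unfolding c_def by blast
    hence "Qf i \<noteq> {}" using cn by auto
    then obtain q' where q': "q' \<in> Qf i" by blast
    then obtain k1 where k1: "i \<in> saved (loc (s k1) q') ?T" "2 * card (saved (loc (s k1) q') ?T) \<le> n + t"
      using Qf iS by blast
    have q'C: "q' \<in> C" using q' Qf iS by blast
    have "finite (saved (loc (s k1) q') ?T)" using invA'[OF exec_inv[OF E] q'C] finite_subset by blast
    hence "card (saved (loc (s k1) q') ?T) \<ge> 1" using k1(1) by (metis One_nat_def Suc_leI card_gt_0_iff empty_iff)
    thus False using k1(2) nt by linarith
  qed
qed


end
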